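(* Let $U,K\ge1$ and $t_{ji}\in(0,1]$ for $j=1,\ldots,U$, $i=1,\ldots,K$. Consider the POMDP with world states $w_{10}$ and $w_{ji}$ ($j=1,\ldots,U$, $i=1,\ldots,K$), actions $A=\{1,\ldots,K\}$, and sensor states $S=\{1,\ldots,U\}$, where (setting $w_{j,0}:=w_{j-1,K}$ for $j\ge2$) world state $w_{j,i-1}$ is deterministically sensed as $s=j$ for all $j=1,\ldots,U$, $i=1,\ldots,K$, and $w_{UK}$ is sensed as $s=1$. From $w_{j,i-1}$, action $i$ takes the agent to $w_{ji}$ with probability $t_{ji}$ and to $w_{10}$ with probability $1-t_{ji}$, and every other action takes it to $w_{10}$; from $w_{UK}$ every action takes it to $w_{10}$. The reward is $1$ at $w_{UK}$ and $0$ elsewhere. Write $\pi_{ji}=\pi(a=i|s=j)$. The optimal memoryless policy (maximizer of the average reward $p^\pi(w_{UK})$) is given, for $j=1,\ldots,U$, by $\pi_{j1}=c_jd_j$ and $\pi_{ji}=\pi_{j,i-1}+c_je_j\,t_{j1}\pi_{j1}\cdots t_{j,i-1}\pi_{j,i-1}$ for $i=2,\ldots,K$, where $d_j=1+t_{11}\pi_{11}+\cdots+t_{11}\pi_{11}\cdots t_{j-1,K}\pi_{j-1,K}$ (the sum of $1$ and all products $t_{11}\pi_{11}\cdots t_{kl}\pi_{kl}$ over indices $(k,l)$ preceding $(j,1)$ in the order $(1,1),\ldots,(1,K),(2,1),\ldots$), $e_j=t_{11}\pi_{11}\cdots t_{j-1,K}\pi_{j-1,K}$, and $c_j$ is the unique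 real positive solution of $\pi_{j1}+\cdots+\pi_{jK}=1$. Empty products are $1$ and empty sums $0$.
   Context: Under a stationary policy $\pi$ the world states form a Markov chain; $p^\pi$ denotes its stationary distribution and the expected reward per time step is $p^\pi(w_{UK})$. Note $d_j,e_j$ depend only on the policy entries for sensor states $1,\ldots,j-1$, so the $c_j$ and $\pi_{j\cdot}$ are determined successively for $j=1,\ldots,U$. *)

theory Defs
  imports Complex_Main
begin

text \<open>World states are encoded as natural numbers 0..U*K:
  state 0 is w_{10}, and state (j-1)*K + i is w_{ji} (1 <= j <= U, 1 <= i <= K).
  This encoding automatically realises the identification w_{j,0} = w_{j-1,K}.  A memoryless policy is
  pol j i = pi(a = i | s = j).\<close>

definition sense :: "nat \<Rightarrow> nat \<Rightarrow> nat \<Rightarrow> nat" where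
  "sense U K n = (if n = U * K then 1 else n div K + 1)"

definition trans :: "nat \<Rightarrow> nat \<Rightarrow> (nat \<Rightarrow> nat \<Rightarrow> real) \<Rightarrow> nat \<Rightarrow> nat \<Rightarrow> nat \<Rightarrow> real" where
  "trans U K t n a m =
     (if n < U * K then
        (if a = n mod K + 1 then
           (if m = Suc n then t (n div K + 1) a else 0)
           + (if m = 0 then 1 - t (n div K + 1) a else 0)
         else (if m = 0 then 1 else 0))
      else (if m = 0 then 1 else 0))"

definition chain :: "nat \<Rightarrow> nat \<Rightarrow> (nat \<Rightarrow> nat \<Rightarrow> real) \<Rightarrow> (nat \<Rightarrow> nat \<Rightarrow> real)
                      \<Rightarrow> nat \<Rightarrow> nat \<Rightarrow> real" where
  "chain U K t pol n m = (\<Sum>a\<in>{1..K}. pol (sense U K n) a * trans U K t n a m)"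

definition is_stationary :: "nat \<Rightarrow> nat \<Rightarrow> (nat \<Rightarrow> nat \<Rightarrow> real) \<Rightarrow> (nat \<Rightarrow> nat \<Rightarrow> real)
                             \<Rightarrow> (nat \<Rightarrow> real) \<Rightarrow> bool" where
  "is_stationary U K t pol p \<longleftrightarrow>
     (\<forall>n. U * K < n \<longrightarrow> p n = 0) \<and>
     (\<forall>n\<le>U * K. 0 \<le> p n) \<and>
     (\<Sum>n\<le>U * K. p n) = 1 \<and>
     (\<forall>m\<le>U * K. (\<Sum>n\<le>U * K. p n * chain U K t pol n m) = p m)"

text \<open>The stationary distribution p^pi (unique for valid policies).\<close>
definition stat_dist :: "nat \<Rightarrow> nat \<Rightarrow> (nat \<Rightarrow> nat \<Rightarrow> real) \<Rightarrow> (nat \<Rightarrow> nat \<Rightarrow> real) \<Rightarrow> nat \<Rightarrow> real" where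
  "stat_dist U K t pol = (THE p. is_stationary U K t pol p)"

definition avg_reward :: "nat \<Rightarrow> nat \<Rightarrow> (nat \<Rightarrow> nat \<Rightarrow> real) \<Rightarrow> (nat \<Rightarrow> nat \<Rightarrow> real) \<Rightarrow> real" where
  "avg_reward U K t pol = stat_dist U K t pol (U * K)"

definition valid_policy :: "nat \<Rightarrow> nat \<Rightarrow> (nat \<Rightarrow> nat \<Rightarrow> real) \<Rightarrow> bool" where
  "valid_policy U K pol \<longleftrightarrow>
     (\<forall>j\<in>{1..U}. (\<forall>i\<in>{1..K}. 0 \<le> pol j i) \<and> (\<Sum>i=1..K. pol j i) = 1)"

definition prefix_prod :: "nat \<Rightarrow> (nat \<Rightarrow> nat \<Rightarrow> real) \<Rightarrow> (nat \<Rightarrow> nat \<Rightarrow> real) \<Rightarrow> nat \<Rightarrow> real" where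
  "prefix_prod K t pol m =
     (\<Prod>r\<in>{1..m}. t ((r - 1) div K + 1) ((r - 1) mod K + 1)
                  * pol ((r - 1) div K + 1) ((r - 1) mod K + 1))"

definition d_par :: "nat \<Rightarrow> (nat \<Rightarrow> nat \<Rightarrow> real) \<Rightarrow> (nat \<Rightarrow> nat \<Rightarrow> real) \<Rightarrow> nat \<Rightarrow> real" where
  "d_par K t pol j = (\<Sum>m\<in>{0..(j - 1) * K}. prefix_prod K t pol m)"

definition e_par :: "nat \<Rightarrow> (nat \<Rightarrow> nat \<Rightarrow> real) \<Rightarrow> (nat \<Rightarrow> nat \<Rightarrow> real) \<Rightarrow> nat \<Rightarrow> real" where
  "e_par K t pol j = prefix_prod K t pol ((j - 1) * K)"

definition opt_rec :: "nat \<Rightarrow> nat \<Rightarrow> (nat \<Rightarrow> nat \<Rightarrow> real) \<Rightarrow> (nat \<Rightarrow> nat \<Rightarrow> real)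
                       \<Rightarrow> (nat \<Rightarrow> real) \<Rightarrow> bool" where
  "opt_rec U K t pol c \<longleftrightarrow>
     (\<forall>j\<in>{1..U}.
        0 < c j \<and>
        pol j 1 = c j * d_par K t pol j \<and>
        (\<forall>i\<in>{2..K}. pol j i = pol j (i - 1)
             + c j * e_par K t pol j * (\<Prod>l\<in>{1..i - 1}. t j l * pol j l)) \<and>
        (\<Sum>i=1..K. pol j i) = 1)"

end

theory Submission
  imports Defs
begin

definition SS :: "nat \<Rightarrow> (nat \<Rightarrow> nat \<Rightarrow> real) \<Rightarrow> (nat \<Rightarrow> nat \<Rightarrow> real) \<Rightarrow> nat \<Rightarrow> real" where
  "SS K t pol k = (\<Sum>m\<in>{0..k}. prefix_prod K t pol m)"

lemma pp0[simp]: "prefix_prod K t pol 0 = 1"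
  by (simp add: prefix_prod_def)

lemma ppSuc: "prefix_prod K t pol (Suc m) = prefix_prod K t pol m *
   (t (m div K + 1) (m mod K + 1) * pol (m div K + 1) (m mod K + 1))"
  by (simp add: prefix_prod_def)

lemma SS0[simp]: "SS K t pol 0 = 1" by (simp add: SS_def)
lemma SSSuc: "SS K t pol (Suc k) = SS K t pol k + prefix_prod K t pol (Suc k)"
  by (simp add: SS_def)

lemma d_par_SS: "d_par K t pol j = SS K t pol ((j-1)*K)"
  by (simp add: d_par_def SS_def)

lemma divmod_block: assumes "l < (K::nat)" shows "((j-1)*K + l) div K = j - 1" "((j-1)*K + l) mod K = l"
  using assms by auto

lemma pp_block: assumes "1 \<le> j" "l \<le> K"
  shows "prefix_prod K t pol ((j-1)*K + l) = prefix_prod K t pol ((j-1)*K) * (\<Prod>i\<in>{1..l}. t j i * pol j i)"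
  using assms(2)
proof (induction l)
  case 0 then show ?case by simp
next
  case (Suc l)
  have "l < K" using Suc by simp
  then have d: "((j-1)*K + l) div K + 1 = j" "((j-1)*K + l) mod K + 1 = Suc l"
    using assms(1) by auto
  have "prefix_prod K t pol ((j-1)*K + Suc l) = prefix_prod K t pol (Suc ((j-1)*K + l))" by simp
  also have "\<dots> = prefix_prod K t pol ((j-1)*K + l) * (t j (Suc l) * pol j (Suc l))"
    unfolding ppSuc d ..
  also have "\<dots> = prefix_prod K t pol ((j-1)*K) * (\<Prod>i\<in>{1..Suc l}. t j i * pol j i)"
    using Suc by simp
  finally show ?case .
qed

lemma block_sum: assumes "1 \<le> (K::nat)"
  shows "(\<Sum>r\<in>{1..U*K}. f ((r-1) div K + 1) ((r-1) mod K + 1)) = (\<Sum>j\<in>{1..U}. \<Sum>i\<in>{1..K}. f j i)"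
proof (induction U)
  case 0 then show ?case by simp
next
  case (Suc U)
  have "(\<Sum>r\<in>{1..Suc U*K}. f ((r-1) div K + 1) ((r-1) mod K + 1))
     = (\<Sum>r\<in>{1..U*K}. f ((r-1) div K + 1) ((r-1) mod K + 1)) + (\<Sum>r\<in>{U*K+1..U*K+K}. f ((r-1) div K + 1) ((r-1) mod K + 1))"
    by (subst sum.ub_add_nat[symmetric]) (auto simp: add.commute)
  also have "(\<Sum>r\<in>{U*K+1..U*K+K}. f ((r-1) div K + 1) ((r-1) mod K + 1)) = (\<Sum>i\<in>{1..K}. f ((i + U*K-1) div K + 1) ((i+U*K-1) mod K + 1))"
    using sum.shift_bounds_cl_nat_ivl[of "\<lambda>r. f ((r-1) div K + 1) ((r-1) mod K + 1)" 1 "U*K" K]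
    by (simp add: add.commute)
  also have "\<dots> = (\<Sum>i\<in>{1..K}. f (Suc U) i)"
  proof (rule sum.cong)
    fix i assume "i \<in> {1..K}"
    then obtain i' where i': "i = Suc i'" "i' < K" by (cases i) auto
    have e: "i + U*K - 1 = i' + U*K" using i' by simp
    have "(i' + U*K) div K = U" "(i' + U*K) mod K = i'" using i' by auto
    then show "f ((i + U*K-1) div K + 1) ((i+U*K-1) mod K + 1) = f (Suc U) i"
      unfolding e using i' by simp
  qed simp
  finally show ?case using Suc by simp
qed


fun st :: "(nat \<Rightarrow> real) \<Rightarrow> real \<Rightarrow> real \<Rightarrow> real \<Rightarrow> nat \<Rightarrow> real \<times> real" where
  "st tj D E c 0 = (D, 1)"
| "st tj D E c (Suc i) = (fst (st tj D E c i) + E * (snd (st tj D E c i) * tj (Suc i) * (c * fst (st tj D E c i))),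
                          snd (st tj D E c i) * tj (Suc i) * (c * fst (st tj D E c i)))"

definition gsum :: "nat \<Rightarrow> (nat \<Rightarrow> real) \<Rightarrow> real \<Rightarrow> real \<Rightarrow> real \<Rightarrow> real" where
  "gsum K tj D E c = (\<Sum>i\<in>{1..K}. c * fst (st tj D E c (i-1)))"

lemma st_nonneg:
  assumes "0 < D" "0 \<le> E" "0 \<le> c" "\<forall>i\<in>{1..K}. 0 \<le> tj i" "i \<le> K"
  shows "D \<le> fst (st tj D E c i) \<and> 0 \<le> snd (st tj D E c i)"
  using assms(5)
proof (induction i)
  case 0 then show ?case by simp
next
  case (Suc i)
  then have h: "D \<le> fst (st tj D E c i)" "0 \<le> snd (st tj D E c i)" "0 \<le> tj (Suc i)" using assms by auto
  have q: "0 \<le> snd (st tj D E c i) * tj (Suc i) * (c * fst (st tj D E c i))"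
    using h assms by (intro mult_nonneg_nonneg) auto
  then have "0 \<le> E * (snd (st tj D E c i) * tj (Suc i) * (c * fst (st tj D E c i)))"
    using assms(2) by simp
  then show ?case using h q by simp
qed

lemma st_mono:
  assumes "0 < D" "0 \<le> E" "0 \<le> c" "c \<le> c'" "\<forall>i\<in>{1..K}. 0 \<le> tj i" "i \<le> K"
  shows "fst (st tj D E c i) \<le> fst (st tj D E c' i) \<and> snd (st tj D E c i) \<le> snd (st tj D E c' i)"
  using assms(6)
proof (induction i)
  case 0 then show ?case by simp
next
  case (Suc i)
  then have h: "fst (st tj D E c i) \<le> fst (st tj D E c' i)" "snd (st tj D E c i) \<le> snd (st tj D E c' i)"
     "0 \<le> tj (Suc i)" using assms by auto
  have n: "D \<le> fst (st tj D E c i) \<and> 0 \<le> snd (st tj D E c i)"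
    using st_nonneg[OF assms(1,2,3,5)] Suc by simp
  have "snd (st tj D E c i) * tj (Suc i) * (c * fst (st tj D E c i))
      \<le> snd (st tj D E c' i) * tj (Suc i) * (c' * fst (st tj D E c' i))"
    using h n assms by (intro mult_mono) auto
  then show ?case using h assms by (auto intro: add_mono mult_left_mono)
qed

lemma gsum_strict_mono:
  assumes "0 < D" "0 \<le> E" "0 \<le> c" "c < c'" "\<forall>i\<in>{1..K}. 0 \<le> tj i" "1 \<le> K"
  shows "gsum K tj D E c < gsum K tj D E c'"
  unfolding gsum_def
proof (rule sum_strict_mono)
  fix i assume i: "i \<in> {1..K}"
  have a: "fst (st tj D E c (i-1)) \<le> fst (st tj D E c' (i-1))"
    using st_mono[OF assms(1,2,3) less_imp_le[OF assms(4)] assms(5), of "i-1"] i by auto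
  have b: "D \<le> fst (st tj D E c (i-1))" using st_nonneg[OF assms(1,2,3,5), of "i-1"] i by auto
  have "c * fst (st tj D E c (i-1)) < c' * fst (st tj D E c (i-1))"
    using b assms by (intro mult_strict_right_mono) auto
  also have "\<dots> \<le> c' * fst (st tj D E c' (i-1))" using a assms by (intro mult_left_mono) auto
  finally show "c * fst (st tj D E c (i-1)) < c' * fst (st tj D E c' (i-1))" .
qed (use assms in auto)

lemma st_cont: "continuous_on UNIV (\<lambda>c. fst (st tj D E c i)) \<and> continuous_on UNIV (\<lambda>c. snd (st tj D E c i))"
  by (induction i) (auto intro!: continuous_intros)

lemma gsum_cont: "continuous_on UNIV (gsum K tj D E)"
  unfolding gsum_def
  by (intro continuous_intros continuous_on_mult[OF continuous_on_id] st_cont[THEN conjunct1])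

lemma gsum_exists:
  assumes "0 < D" "0 \<le> E" "\<forall>i\<in>{1..K}. 0 \<le> tj i" "1 \<le> K"
  shows "\<exists>c. 0 < c \<and> gsum K tj D E c = 1"
proof -
  have g0: "gsum K tj D E 0 = 0" by (simp add: gsum_def)
  have "gsum K tj D E (1/D) = (\<Sum>i\<in>insert 1 {2..K}. 1/D * fst (st tj D E (1/D) (i-1)))"
    unfolding gsum_def using assms(4) by (intro sum.cong) auto
  also have "\<dots> = 1 + (\<Sum>i\<in>{2..K}. 1/D * fst (st tj D E (1/D) (i-1)))"
    using assms(1) by simp
  also have "\<dots> \<ge> 1"
  proof -
    have "(\<Sum>i\<in>{2..K}. 1/D * fst (st tj D E (1/D) (i-1))) \<ge> 0"
    proof (rule sum_nonneg)
      fix i assume "i \<in> {2..K}"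
      then have "D \<le> fst (st tj D E (1/D) (i-1))" using st_nonneg[OF assms(1,2) _ assms(3), of "1/D" "i-1"] assms(1) by auto
      then show "0 \<le> 1/D * fst (st tj D E (1/D) (i-1))" using assms(1) by simp
    qed
    then show ?thesis by simp
  qed
  finally have g1: "1 \<le> gsum K tj D E (1/D)" .
  obtain c where c: "0 \<le> c" "c \<le> 1/D" "gsum K tj D E c = 1"
    using IVT'[of "gsum K tj D E" 0 1 "1/D"] g0 g1 assms(1) gsum_cont[of K tj D E]
    by (auto intro: continuous_on_subset)
  then have "c \<noteq> 0" using g0 by auto
  then have "0 < c" using c by simp
  then show ?thesis using c by blast
qed


lemma pos_range:
  assumes "r \<in> {1..U*K}" "1 \<le> (K::nat)"
  shows "(r-1) div K + 1 \<in> {1..U}" "(r-1) mod K + 1 \<in> {1..K}"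
        "((r-1) div K + 1 - 1) * K + ((r-1) mod K + 1) - 1 = r - 1"
proof -
  have "r - 1 < U * K" using assms by auto
  then have "(r-1) div K < U" by (simp add: less_mult_imp_div_less)
  then show "(r-1) div K + 1 \<in> {1..U}" by auto
  have "(r-1) mod K < K" using assms by simp
  then show "(r-1) mod K + 1 \<in> {1..K}" by auto
  show "((r-1) div K + 1 - 1) * K + ((r-1) mod K + 1) - 1 = r - 1"
    by (simp add: div_mult_mod_eq)
qed

lemma pp_nonneg:
  assumes "\<forall>r\<in>{1..m}. 0 \<le> t ((r-1) div K + 1) ((r-1) mod K + 1) * pol ((r-1) div K + 1) ((r-1) mod K + 1)"
  shows "0 \<le> prefix_prod K t pol m"
  unfolding prefix_prod_def using assms by (intro prod_nonneg) auto

lemma pp_pos: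
  assumes "\<forall>r\<in>{1..m}. 0 < t ((r-1) div K + 1) ((r-1) mod K + 1) * pol ((r-1) div K + 1) ((r-1) mod K + 1)"
  shows "0 < prefix_prod K t pol m"
  unfolding prefix_prod_def using assms by (intro prod_pos) auto

lemma SS_ge1:
  assumes "\<forall>m\<le>k. 0 \<le> prefix_prod K t pol m"
  shows "1 \<le> SS K t pol k"
  using assms
proof (induction k)
  case 0 then show ?case by simp
next
  case (Suc k) then show ?case by (simp add: SSSuc add_increasing2)
qed

lemma valid_fact_nonneg:
  assumes "valid_policy U K pol" "\<forall>j\<in>{1..U}. \<forall>i\<in>{1..K}. 0 < t j i \<and> t j i \<le> 1" "1 \<le> K" "m \<le> U*K"
  shows "0 \<le> prefix_prod K t pol m"
proof (rule pp_nonneg, intro ballI)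
  fix r assume r: "r \<in> {1..m}"
  then have r': "r \<in> {1..U*K}" using assms(4) by auto
  show "0 \<le> t ((r-1) div K + 1) ((r-1) mod K + 1) * pol ((r-1) div K + 1) ((r-1) mod K + 1)"
  proof -
    have a: "(r-1) div K + 1 \<in> {1..U}" "(r-1) mod K + 1 \<in> {1..K}" using pos_range[OF r' assms(3)] by auto
    have "0 < t ((r-1) div K + 1) ((r-1) mod K + 1)" using assms(2) a by blast
    moreover have "0 \<le> pol ((r-1) div K + 1) ((r-1) mod K + 1)" using assms(1) a unfolding valid_policy_def by blast
    ultimately show ?thesis by simp
  qed
qed

context
  fixes U K :: nat and t :: "nat \<Rightarrow> nat \<Rightarrow> real" and pol c j
  assumes opt: "opt_rec U K t pol c" and K1: "1 \<le> K" and j: "j \<in> {1..U}"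
begin

lemma opt_st:
  "i < K \<Longrightarrow> pol j (i+1) = c j * fst (st (t j) (d_par K t pol j) (e_par K t pol j) (c j) i)
     \<and> snd (st (t j) (d_par K t pol j) (e_par K t pol j) (c j) i) = (\<Prod>l\<in>{1..i}. t j l * pol j l)"
proof (induction i)
  case 0 then show ?case using opt j unfolding opt_rec_def by auto
next
  case (Suc i)
  let ?s = "st (t j) (d_par K t pol j) (e_par K t pol j) (c j)"
  have IH: "pol j (i+1) = c j * fst (?s i)" "snd (?s i) = (\<Prod>l\<in>{1..i}. t j l * pol j l)"
    using Suc by auto
  have sn: "snd (?s (Suc i)) = (\<Prod>l\<in>{1..Suc i}. t j l * pol j l)"
    using IH by (simp add: mult_ac)
  have "Suc i + 1 \<in> {2..K}" using Suc by auto
  then have "pol j (Suc i + 1) = pol j (Suc i) + c j * e_par K t pol j * (\<Prod>l\<in>{1..Suc i}. t j l * pol j l)"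
    using opt j unfolding opt_rec_def by auto
  also have "\<dots> = c j * fst (?s (Suc i))"
    using IH sn[symmetric] by (simp add: algebra_simps)
  finally show ?case using sn by simp
qed

lemma opt_S:
  "i < K \<Longrightarrow> fst (st (t j) (d_par K t pol j) (e_par K t pol j) (c j) i) = SS K t pol ((j-1)*K + i)"
proof (induction i)
  case 0 then show ?case by (simp add: d_par_SS)
next
  case (Suc i)
  let ?s = "st (t j) (d_par K t pol j) (e_par K t pol j) (c j)"
  have sn: "snd (?s (Suc i)) = (\<Prod>l\<in>{1..Suc i}. t j l * pol j l)" using opt_st[OF Suc.prems] by simp
  have "fst (?s (Suc i)) = fst (?s i) + e_par K t pol j * snd (?s (Suc i))" by simp
  also have "\<dots> = SS K t pol ((j-1)*K + i) + prefix_prod K t pol ((j-1)*K + Suc i)"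
    using Suc pp_block[of j "Suc i" K t pol] j sn by (simp add: e_par_def)
  also have "\<dots> = SS K t pol ((j-1)*K + Suc i)" by (simp add: SSSuc)
  finally show ?case .
qed

lemma opt_char: "i \<in> {1..K} \<Longrightarrow> pol j i = c j * SS K t pol ((j-1)*K + i - 1)"
proof -
  assume i: "i \<in> {1..K}"
  then have "i - 1 < K" by auto
  from opt_st[OF this] opt_S[OF this] i show ?thesis by auto
qed

end


lemma ji_pos: assumes "j \<in> {1..U}" "i \<in> {1..(K::nat)}"
  shows "(j-1)*K + i \<in> {1..U*K}" "((j-1)*K + i - 1) div K + 1 = j" "((j-1)*K + i - 1) mod K + 1 = i"
proof -
  obtain i' where i': "i = Suc i'" "i' < K" using assms by (cases i) auto
  have e: "(j-1)*K + i - 1 = (j-1)*K + i'" using i' by simp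
  show "((j-1)*K + i - 1) div K + 1 = j" "((j-1)*K + i - 1) mod K + 1 = i"
    unfolding e using divmod_block[OF i'(2), of j] assms i' by auto
  have "(j-1)*K + i \<le> (j-1)*K + K" using assms by auto
  also have "\<dots> = j * K" using assms by (cases j) auto
  also have "\<dots> \<le> U*K" using assms by auto
  finally show "(j-1)*K + i \<in> {1..U*K}" using assms by auto
qed

context
  fixes U K :: nat and t :: "nat \<Rightarrow> nat \<Rightarrow> real" and pol c
  assumes opt: "opt_rec U K t pol c" and K1: "1 \<le> K"
    and tc: "\<forall>j\<in>{1..U}. \<forall>i\<in>{1..K}. 0 < t j i \<and> t j i \<le> 1"
begin

lemma opt_pos_all: "k \<le> U*K \<Longrightarrow> \<forall>r\<in>{1..k}. 0 < pol ((r-1) div K + 1) ((r-1) mod K + 1)"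
proof (induction k)
  case 0 then show ?case by simp
next
  case (Suc k)
  then have IH: "\<forall>r\<in>{1..k}. 0 < pol ((r-1) div K + 1) ((r-1) mod K + 1)" by simp
  have nn: "\<forall>m\<le>k. 0 \<le> prefix_prod K t pol m"
  proof (intro allI impI pp_nonneg ballI)
    fix m r assume m: "m \<le> k" and r: "r \<in> {1..m}"
    then have r': "r \<in> {1..U*K}" using Suc by auto
    have a: "(r-1) div K + 1 \<in> {1..U}" "(r-1) mod K + 1 \<in> {1..K}" using pos_range[OF r' K1] by auto
    have "0 < t ((r-1) div K + 1) ((r-1) mod K + 1)" using tc a by blast
    moreover have "0 < pol ((r-1) div K + 1) ((r-1) mod K + 1)" using IH m r by auto
    ultimately show "0 \<le> t ((r-1) div K + 1) ((r-1) mod K + 1) * pol ((r-1) div K + 1) ((r-1) mod K + 1)"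
      by simp
  qed
  have S1: "1 \<le> SS K t pol k" using SS_ge1[OF nn] .
  have r': "Suc k \<in> {1..U*K}" using Suc by auto
  note pr = pos_range[OF r' K1]
  have "pol (k div K + 1) (k mod K + 1) = c (k div K + 1) * SS K t pol k"
    using opt_char[OF opt K1, of "k div K + 1" "k mod K + 1"] pr by simp
  moreover have "0 < c (k div K + 1)" using opt pr unfolding opt_rec_def by auto
  ultimately have "0 < pol (k div K + 1) (k mod K + 1)" using S1 by simp
  then show ?case using IH by (auto simp: le_Suc_eq)
qed

lemma opt_pos: "r \<in> {1..U*K} \<Longrightarrow> 0 < pol ((r-1) div K + 1) ((r-1) mod K + 1)"
  using opt_pos_all[of "U*K"] by auto

lemma opt_valid: "valid_policy U K pol"
  unfolding valid_policy_def
proof (intro ballI conjI)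
  fix j assume j: "j \<in> {1..U}"
  show "(\<Sum>i = 1..K. pol j i) = 1" using opt j unfolding opt_rec_def by auto
  fix i assume i: "i \<in> {1..K}"
  note q = ji_pos[OF j i]
  show "0 \<le> pol j i" using opt_pos[OF q(1)] q(2,3) by simp
qed

end


definition fx :: "nat \<Rightarrow> (nat \<Rightarrow> nat \<Rightarrow> real) \<Rightarrow> (nat \<Rightarrow> nat \<Rightarrow> real) \<Rightarrow> nat \<Rightarrow> real" where
  "fx K t pol n = t (n div K + 1) (n mod K + 1) * pol (n div K + 1) (n mod K + 1)"

lemma ppSuc': "prefix_prod K t pol (Suc m) = prefix_prod K t pol m * fx K t pol m"
  by (simp add: ppSuc fx_def)

lemma chain_succ: assumes "n < U*K" "1 \<le> K"
  shows "chain U K t pol n (Suc n) = fx K t pol n"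
proof -
  have "n mod K < K" using assms by simp
  then have i: "n mod K + 1 \<in> {1..K}" by auto
  have "chain U K t pol n (Suc n) = (\<Sum>a\<in>{1..K}. if a = n mod K + 1 then pol (n div K + 1) a * t (n div K + 1) a else 0)"
    unfolding chain_def sense_def trans_def using assms by (intro sum.cong) auto
  also have "\<dots> = fx K t pol n" using i by (simp add: fx_def)
  finally show ?thesis .
qed

lemma chain_other: assumes "n \<le> U*K" "m \<noteq> 0" "m \<noteq> Suc n \<or> n = U*K"
  shows "chain U K t pol n m = 0"
  unfolding chain_def sense_def trans_def using assms by (intro sum.neutral) auto

lemma chain_zero: assumes "valid_policy U K pol" "n \<le> U*K" "1 \<le> K" "1 \<le> U"
  shows "chain U K t pol n 0 = (if n < U*K then 1 - fx K t pol n else 1)"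
proof (cases "n < U*K")
  case True
  have "n mod K < K" using assms by simp
  then have i: "n mod K + 1 \<in> {1..K}" by auto
  have "n div K < U" using True by (simp add: less_mult_imp_div_less)
  then have j: "n div K + 1 \<in> {1..U}" by auto
  have "chain U K t pol n 0 = (\<Sum>a\<in>{1..K}. pol (n div K + 1) a - (if a = n mod K + 1 then pol (n div K + 1) a * t (n div K + 1) a else 0))"
    unfolding chain_def sense_def trans_def using True by (intro sum.cong) (auto simp: algebra_simps)
  also have "\<dots> = 1 - fx K t pol n"
    using i j assms(1) unfolding valid_policy_def by (simp add: sum_subtractf fx_def)
  finally show ?thesis using True by simp
next
  case False
  then have "n = U*K" using assms by simp
  then have "chain U K t pol n 0 = (\<Sum>a\<in>{1..K}. pol 1 a)"
    unfolding chain_def sense_def trans_def by simp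
  also have "\<dots> = 1" using assms(1,4) unfolding valid_policy_def by auto
  finally show ?thesis using False by simp
qed

lemma balance_pos: assumes "1 \<le> m" "m \<le> U*K" "1 \<le> K"
  shows "(\<Sum>n\<le>U*K. q n * chain U K t pol n m) = q (m-1) * fx K t pol (m-1)"
proof -
  have "(\<Sum>n\<le>U*K. q n * chain U K t pol n m) = (\<Sum>n\<le>U*K. if n = m - 1 then q (m-1) * fx K t pol (m-1) else 0)"
  proof (rule sum.cong)
    fix n assume n: "n \<in> {..U*K}"
    show "q n * chain U K t pol n m = (if n = m - 1 then q (m-1) * fx K t pol (m-1) else 0)"
    proof (cases "n = m - 1")
      case True
      then have "m = Suc n" "n < U*K" using assms by auto
      then show ?thesis using chain_succ[of n U K t pol] assms True by simp
    next
      case False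
      then have "chain U K t pol n m = 0" using assms n by (intro chain_other) auto
      then show ?thesis using False by simp
    qed
  qed simp
  also have "\<dots> = q (m-1) * fx K t pol (m-1)"
    using assms by (subst sum.delta) auto
  finally show ?thesis .
qed

context
  fixes U K :: nat and t :: "nat \<Rightarrow> nat \<Rightarrow> real" and pol
  assumes val: "valid_policy U K pol" and K1: "1 \<le> K" and U1: "1 \<le> U"
    and tc: "\<forall>j\<in>{1..U}. \<forall>i\<in>{1..K}. 0 < t j i \<and> t j i \<le> 1"
begin

definition "pst m = (if m \<le> U*K then prefix_prod K t pol m / SS K t pol (U*K) else 0)"

lemma SSpos: "1 \<le> SS K t pol (U*K)"
  using SS_ge1 valid_fact_nonneg[OF val tc K1] by auto

lemma pst_stat: "is_stationary U K t pol pst"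
  unfolding is_stationary_def
proof (intro conjI allI impI)
  show "\<And>n. U * K < n \<Longrightarrow> pst n = 0" by (simp add: pst_def)
  show "\<And>n. n \<le> U*K \<Longrightarrow> 0 \<le> pst n" using valid_fact_nonneg[OF val tc K1] SSpos by (simp add: pst_def)
  show "(\<Sum>n\<le>U*K. pst n) = 1"
  proof -
    have "(\<Sum>n\<le>U*K. pst n) = (\<Sum>n\<le>U*K. prefix_prod K t pol n) / SS K t pol (U*K)"
      unfolding pst_def by (simp add: sum_divide_distrib)
    also have "\<dots> = 1" using SSpos by (simp add: SS_def atLeast0AtMost)
    finally show ?thesis .
  qed
  fix m assume m: "m \<le> U*K"
  show "(\<Sum>n\<le>U*K. pst n * chain U K t pol n m) = pst m"
  proof (cases "m = 0")
    case False
    then obtain m' where m': "m = Suc m'" by (cases m) auto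
    show ?thesis using balance_pos[of m U K pst t pol] False m K1 m'
      by (simp add: pst_def ppSuc')
  next
    case True
    obtain N where N: "U*K = Suc N" using U1 K1 by (cases "U*K") auto
    have "(\<Sum>n\<le>U*K. pst n * chain U K t pol n 0) = (\<Sum>n<U*K. pst n * (1 - fx K t pol n)) + pst (U*K)"
      using chain_zero[OF val _ K1 U1] by (simp add: lessThan_Suc_atMost[symmetric])
    also have "\<dots> = (\<Sum>n<U*K. pst n) + pst (U*K) - (\<Sum>n<U*K. pst (Suc n))"
    proof -
      have "\<And>n. n < U*K \<Longrightarrow> pst n * fx K t pol n = pst (Suc n)"
        by (simp add: pst_def ppSuc')
      then have "(\<Sum>n<U*K. pst n * fx K t pol n) = (\<Sum>n<U*K. pst (Suc n))" by (intro sum.cong) auto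
      then show ?thesis by (simp add: algebra_simps sum_subtractf)
    qed
    also have "\<dots> = pst 0"
    proof -
      have "sum pst {..<Suc N} = pst 0 + (\<Sum>n<N. pst (Suc n))" by (rule sum.lessThan_Suc_shift)
      moreover have "sum pst {..<Suc N} = sum pst {..<N} + pst N" by simp
      ultimately show ?thesis unfolding N by simp
    qed
    finally show ?thesis using True by simp
  qed
qed

lemma stat_unique: assumes "is_stationary U K t pol q" shows "q = pst"
proof -
  have bal: "\<And>m. m \<le> U*K \<Longrightarrow> (\<Sum>n\<le>U*K. q n * chain U K t pol n m) = q m"
    and sum1: "(\<Sum>n\<le>U*K. q n) = 1" and z: "\<And>n. U*K < n \<Longrightarrow> q n = 0"
    using assms unfolding is_stationary_def by auto
  have form: "m \<le> U*K \<Longrightarrow> q m = q 0 * prefix_prod K t pol m" for m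
  proof (induction m)
    case 0 then show ?case by simp
  next
    case (Suc m)
    have "q (Suc m) = q m * fx K t pol m"
      using bal[OF Suc.prems] balance_pos[of "Suc m" U K q t pol] Suc.prems K1 by simp
    then show ?case using Suc by (simp add: ppSuc')
  qed
  have "(\<Sum>n\<le>U*K. q n) = (\<Sum>n\<le>U*K. q 0 * prefix_prod K t pol n)"
    by (rule sum.cong) (auto intro: form)
  then have "1 = (\<Sum>n\<le>U*K. q 0 * prefix_prod K t pol n)" using sum1 by simp
  also have "\<dots> = q 0 * SS K t pol (U*K)" by (simp add: SS_def atLeast0AtMost sum_distrib_left)
  finally have e1: "1 = q 0 * SS K t pol (U*K)" .
  have "SS K t pol (U*K) \<noteq> 0" using SSpos by simp
  then have q0: "q 0 = 1 / SS K t pol (U*K)" using e1 by (simp add: eq_divide_eq)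
  show ?thesis
  proof
    fix m show "q m = pst m"
    proof (cases "m \<le> U*K")
      case True
      have "pst m = prefix_prod K t pol m / SS K t pol (U*K)" using True by (simp add: pst_def)
      then show ?thesis using form[OF True] q0 by simp
    next
      case False
      have "pst m = 0" using False by (simp add: pst_def)
      then show ?thesis using z[of m] False by simp
    qed
  qed
qed

lemma avg_eq: "avg_reward U K t pol = prefix_prod K t pol (U*K) / SS K t pol (U*K)"
proof -
  have "stat_dist U K t pol = pst"
    unfolding stat_dist_def using pst_stat stat_unique by (rule the_equality)
  then show ?thesis unfolding avg_reward_def pst_def by simp
qed

end


lemma st_pos:
  assumes "0 < D" "0 \<le> E" "0 < c" "\<forall>i\<in>{1..K}. 0 < tj i" "i \<le> K"
  shows "0 < snd (st tj D E c i)"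
  using assms(5)
proof (induction i)
  case 0 then show ?case by simp
next
  case (Suc i)
  have nn: "\<forall>i\<in>{1..K}. 0 \<le> tj i" using assms(4) by auto
  have f: "D \<le> fst (st tj D E c i)" using st_nonneg[OF assms(1,2) _ nn, of c i] assms Suc by auto
  have "0 < tj (Suc i)" using assms Suc by auto
  then show ?case using Suc f assms by simp
qed

definition cc :: "nat \<Rightarrow> (nat \<Rightarrow> real) \<Rightarrow> real \<Rightarrow> real \<Rightarrow> real" where
  "cc K tj D E = (SOME c. 0 < c \<and> gsum K tj D E c = 1)"

fun DE :: "nat \<Rightarrow> (nat \<Rightarrow> nat \<Rightarrow> real) \<Rightarrow> nat \<Rightarrow> real \<times> real" where
  "DE K t 0 = (1, 1)"
| "DE K t (Suc j) = (fst (st (t (Suc j)) (fst (DE K t j)) (snd (DE K t j)) (cc K (t (Suc j)) (fst (DE K t j)) (snd (DE K t j))) K),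
     snd (DE K t j) * snd (st (t (Suc j)) (fst (DE K t j)) (snd (DE K t j)) (cc K (t (Suc j)) (fst (DE K t j)) (snd (DE K t j))) K))"

definition cj :: "nat \<Rightarrow> (nat \<Rightarrow> nat \<Rightarrow> real) \<Rightarrow> nat \<Rightarrow> real" where
  "cj K t j = cc K (t j) (fst (DE K t (j-1))) (snd (DE K t (j-1)))"

definition polc :: "nat \<Rightarrow> (nat \<Rightarrow> nat \<Rightarrow> real) \<Rightarrow> nat \<Rightarrow> nat \<Rightarrow> real" where
  "polc K t j i = cj K t j * fst (st (t j) (fst (DE K t (j-1))) (snd (DE K t (j-1))) (cj K t j) (i-1))"

lemma DE_Suc': "DE K t (Suc j) = (fst (st (t (Suc j)) (fst (DE K t j)) (snd (DE K t j)) (cj K t (Suc j)) K),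
     snd (DE K t j) * snd (st (t (Suc j)) (fst (DE K t j)) (snd (DE K t j)) (cj K t (Suc j)) K))"
  by (simp add: cj_def)

declare DE.simps(2)[simp del]

context
  fixes U K :: nat and t :: "nat \<Rightarrow> nat \<Rightarrow> real"
  assumes K1: "1 \<le> K" and tc: "\<forall>j\<in>{1..U}. \<forall>i\<in>{1..K}. 0 < t j i \<and> t j i \<le> 1"
begin

lemma tpos: assumes "1 \<le> j" "j \<le> U" "i \<in> {1..K}" shows "0 < t j i"
proof -
  have "j \<in> {1..U}" using assms by simp
  then show ?thesis using tc assms(3) by blast
qed

lemma DE_pos: "j < U \<Longrightarrow> 0 < fst (DE K t j) \<and> 0 < snd (DE K t j) \<and> 0 < cj K t (Suc j)
   \<and> gsum K (t (Suc j)) (fst (DE K t j)) (snd (DE K t j)) (cj K t (Suc j)) = 1"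
proof (induction j)
  case 0
  have t1: "\<forall>i\<in>{1..K}. 0 \<le> t 1 i"
  proof
    fix i assume i: "i \<in> {1..K}"
    have "1 \<in> {1..U}" using 0 by auto
    then have "0 < t 1 i \<and> t 1 i \<le> 1" using tc i by blast
    then show "0 \<le> t 1 i" by simp
  qed
  have "\<exists>c. 0 < c \<and> gsum K (t 1) 1 1 c = 1" using t1 K1 by (intro gsum_exists) auto
  from someI_ex[OF this] show ?case unfolding cj_def cc_def by simp
next
  case (Suc j)
  then have IH: "0 < fst (DE K t j)" "0 < snd (DE K t j)" "0 < cj K t (Suc j)" by auto
  have tj: "\<forall>i\<in>{1..K}. 0 < t (Suc j) i" using tc Suc.prems by auto
  have tjn: "\<forall>i\<in>{1..K}. 0 \<le> t (Suc j) i" using tj by (simp add: less_imp_le)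
  have f: "0 < fst (DE K t (Suc j))" using st_nonneg[OF IH(1) less_imp_le[OF IH(2)] less_imp_le[OF IH(3)] tjn, of K] IH
    by (auto simp: DE_Suc')
  have s: "0 < snd (DE K t (Suc j))" using st_pos[of "fst (DE K t j)" "snd (DE K t j)" "cj K t (Suc j)" K "t (Suc j)" K] IH tj
    by (auto simp: DE_Suc')
  have tj2: "\<forall>i\<in>{1..K}. 0 \<le> t (Suc (Suc j)) i" using tpos[of "Suc (Suc j)"] Suc.prems by (simp add: less_imp_le)
  have "\<exists>c. 0 < c \<and> gsum K (t (Suc (Suc j))) (fst (DE K t (Suc j))) (snd (DE K t (Suc j))) c = 1"
    using f s tj2 K1 by (intro gsum_exists) auto
  from someI_ex[OF this] have "0 < cj K t (Suc (Suc j)) \<and> gsum K (t (Suc (Suc j))) (fst (DE K t (Suc j))) (snd (DE K t (Suc j))) (cj K t (Suc (Suc j))) = 1"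
    unfolding cj_def cc_def by simp
  then show ?case using f s by simp
qed

lemma polc_snd: "snd (st (t j) (fst (DE K t (j-1))) (snd (DE K t (j-1))) (cj K t j) m) = (\<Prod>l\<in>{1..m}. t j l * polc K t j l)"
  by (induction m) (simp_all add: polc_def mult_ac)

lemma DE_pp: "j \<le> U \<Longrightarrow> prefix_prod K t (polc K t) (j*K) = snd (DE K t j) \<and> SS K t (polc K t) (j*K) = fst (DE K t j)"
proof (induction j)
  case 0 then show ?case by simp
next
  case (Suc j)
  let ?D = "fst (DE K t j)" and ?E = "snd (DE K t j)" and ?c = "cj K t (Suc j)"
  let ?s = "st (t (Suc j)) ?D ?E ?c"
  have IH: "prefix_prod K t (polc K t) (j*K) = ?E" "SS K t (polc K t) (j*K) = ?D" using Suc by auto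
  have inner: "l \<le> K \<Longrightarrow> prefix_prod K t (polc K t) (j*K + l) = ?E * snd (?s l) \<and> SS K t (polc K t) (j*K + l) = fst (?s l)" for l
  proof (induction l)
    case 0 then show ?case using IH by simp
  next
    case (Suc l)
    then have l: "l < K" by simp
    have dm: "(j*K + l) div K = j" "(j*K + l) mod K = l" using l by auto
    have fxe: "fx K t (polc K t) (j*K + l) = t (Suc j) (Suc l) * (?c * fst (?s l))"
      unfolding fx_def dm by (simp add: polc_def)
    have "prefix_prod K t (polc K t) (j*K + Suc l) = prefix_prod K t (polc K t) (j*K + l) * fx K t (polc K t) (j*K + l)"
      by (simp only: add_Suc_right ppSuc')
    also have "\<dots> = ?E * snd (?s l) * (t (Suc j) (Suc l) * (?c * fst (?s l)))"
      using Suc l by (simp only: fxe)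
    also have "\<dots> = ?E * snd (?s (Suc l))" by simp
    finally have pp: "prefix_prod K t (polc K t) (j*K + Suc l) = ?E * snd (?s (Suc l))" .
    have "SS K t (polc K t) (j*K + Suc l) = fst (?s l) + ?E * snd (?s (Suc l))"
      using Suc l pp by (simp add: SSSuc)
    then show ?case using pp by simp
  qed
  have e: "Suc j * K = j*K + K" by simp
  show ?case unfolding e DE_Suc' fst_conv snd_conv using inner[of K] by blast
qed

lemma exist_opt: "opt_rec U K t (polc K t) (cj K t)"
  unfolding opt_rec_def
proof (intro ballI conjI)
  fix j assume j: "j \<in> {1..U}"
  then obtain j' where j': "j = Suc j'" "j' < U" by (cases j) auto
  note P = DE_pos[OF j'(2)]
  note Q = DE_pp[of j'] 
  have dp: "d_par K t (polc K t) j = fst (DE K t j')" using Q j' by (simp add: d_par_SS)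
  have ep: "e_par K t (polc K t) j = snd (DE K t j')" using Q j' by (simp add: e_par_def)
  show "0 < cj K t j" using P j' by simp
  show "polc K t j 1 = cj K t j * d_par K t (polc K t) j" using dp j' by (simp add: polc_def)
  show "(\<Sum>i = 1..K. polc K t j i) = 1" using P j' by (simp add: gsum_def polc_def)
    fix i assume i: "i \<in> {2..K}"
    then obtain i' where i': "i = Suc (Suc i')" by (cases i; cases "i-1") auto
    let ?s = "st (t j) (fst (DE K t (j-1))) (snd (DE K t (j-1))) (cj K t j)"
    have a: "polc K t j i = cj K t j * fst (?s (Suc i'))" by (simp add: polc_def i')
    have b: "polc K t j (i-1) = cj K t j * fst (?s i')" by (simp add: polc_def i')
    have c: "fst (?s (Suc i')) = fst (?s i') + snd (DE K t (j-1)) * snd (?s (Suc i'))" by simp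
    have ep': "e_par K t (polc K t) j = snd (DE K t (j-1))" using ep j' by simp
    show "polc K t j i = polc K t j (i - 1) + cj K t j * e_par K t (polc K t) j * (\<Prod>l = 1..i - 1. t j l * polc K t j l)"
    proof -
      have im: "i - 1 = Suc i'" using i' by simp
      show ?thesis unfolding a b ep' im polc_snd[of j "Suc i'", symmetric] c b[unfolded im] by (simp add: algebra_simps)
    qed
qed

end


lemma opt_unique:
  assumes opt1: "opt_rec U K t pol c" and opt2: "opt_rec U K t pol' c'" and K1: "1 \<le> K"
    and tc: "\<forall>j\<in>{1..U}. \<forall>i\<in>{1..K}. 0 < t j i \<and> t j i \<le> 1"
  shows "\<forall>j\<in>{1..U}. c j = c' j \<and> (\<forall>i\<in>{1..K}. pol j i = pol' j i)"
proof -
  have v1: "valid_policy U K pol" using opt_valid[OF opt1 K1 tc] .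
  have v2: "valid_policy U K pol'" using opt_valid[OF opt2 K1 tc] .
  have main: "1 \<le> j \<Longrightarrow> j \<le> U \<Longrightarrow> c j = c' j \<and> (\<forall>i\<in>{1..K}. pol j i = pol' j i)" for j
  proof (induction j rule: less_induct)
    case (less j)
    have jU: "j \<in> {1..U}" using less by simp
    have eqpp: "prefix_prod K t pol m = prefix_prod K t pol' m" if m: "m \<le> (j-1)*K" for m
      unfolding prefix_prod_def
    proof (rule prod.cong)
      fix r assume r: "r \<in> {1..m}"
      have "r - 1 < (j-1)*K" using r m by auto
      then have lt: "(r-1) div K < j - 1" by (simp add: less_mult_imp_div_less)
      have "(r-1) mod K < K" using K1 by simp
      then have ii: "(r-1) mod K + 1 \<in> {1..K}" by auto
      have "pol ((r-1) div K + 1) ((r-1) mod K + 1) = pol' ((r-1) div K + 1) ((r-1) mod K + 1)"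
        using less.IH[of "(r-1) div K + 1"] lt less.prems ii by auto
      then show "t ((r-1) div K + 1) ((r-1) mod K + 1) * pol ((r-1) div K + 1) ((r-1) mod K + 1)
          = t ((r-1) div K + 1) ((r-1) mod K + 1) * pol' ((r-1) div K + 1) ((r-1) mod K + 1)" by simp
    qed simp
    have dd: "d_par K t pol' j = d_par K t pol j" unfolding d_par_def using eqpp by (intro sum.cong) auto
    have ee: "e_par K t pol' j = e_par K t pol j" unfolding e_par_def using eqpp by simp
    define D where "D = d_par K t pol j"
    define E where "E = e_par K t pol j"
    have ch1: "pol j i = c j * fst (st (t j) D E (c j) (i-1))" if "i \<in> {1..K}" for i
      using opt_st[OF opt1 K1 jU, of "i-1"] that unfolding D_def E_def by auto
    have ch2: "pol' j i = c' j * fst (st (t j) D E (c' j) (i-1))" if "i \<in> {1..K}" for i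
      using opt_st[OF opt2 K1 jU, of "i-1"] that unfolding D_def E_def dd ee by auto
    have g1: "gsum K (t j) D E (c j) = 1"
    proof -
      have "gsum K (t j) D E (c j) = (\<Sum>i=1..K. pol j i)" unfolding gsum_def using ch1 by simp
      then show ?thesis using opt1 jU unfolding opt_rec_def by auto
    qed
    have g2: "gsum K (t j) D E (c' j) = 1"
    proof -
      have "gsum K (t j) D E (c' j) = (\<Sum>i=1..K. pol' j i)" unfolding gsum_def using ch2 by simp
      then show ?thesis using opt2 jU unfolding opt_rec_def by auto
    qed
    have "j - 1 \<le> U" using less by simp
    then have le: "(j-1)*K \<le> U*K" by (rule mult_right_mono) simp
    have nn: "\<forall>m\<le>(j-1)*K. 0 \<le> prefix_prod K t pol m"
      using valid_fact_nonneg[OF v1 tc K1] le order_trans by blast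
    have Dp: "0 < D" unfolding D_def d_par_SS using SS_ge1[OF nn] by simp
    have Ep: "0 \<le> E" unfolding E_def e_par_def using nn by simp
    have tj: "\<forall>i\<in>{1..K}. 0 \<le> t j i" using tc jU by (auto intro: less_imp_le)
    have c1: "0 < c j" "0 < c' j" using opt1 opt2 jU unfolding opt_rec_def by auto
    have ceq: "c j = c' j"
    proof (rule ccontr)
      assume "c j \<noteq> c' j"
      then consider "c j < c' j" | "c' j < c j" by linarith
      then show False
      proof cases
        case 1 then show False using gsum_strict_mono[OF Dp Ep _ 1 tj K1] c1 g1 g2 by simp
      next
        case 2 then show False using gsum_strict_mono[OF Dp Ep _ 2 tj K1] c1 g1 g2 by simp
      qed
    qed
    show ?case using ceq ch1 ch2 by simp
  qed
  then show ?thesis by auto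
qed

lemma abel: "(\<Sum>m\<in>{0..n}. f m * g m) = (\<Sum>m\<in>{0..n}. f m) * g n - (\<Sum>r\<in>{1..n}. (\<Sum>m\<in>{0..r-1}. f m) * (g r - g (r - 1)))"
  for f g :: "nat \<Rightarrow> real"
proof (induction n)
  case 0 then show ?case by simp
next
  case (Suc n) then show ?case by (simp add: algebra_simps)
qed


lemma opt_best:
  assumes opt: "opt_rec U K t pol c" and val': "valid_policy U K pol'" and K1: "1 \<le> K" and U1: "1 \<le> U"
    and tc: "\<forall>j\<in>{1..U}. \<forall>i\<in>{1..K}. 0 < t j i \<and> t j i \<le> 1"
  shows "avg_reward U K t pol' \<le> avg_reward U K t pol"
proof -
  have val: "valid_policy U K pol" using opt_valid[OF opt K1 tc] .
  define N where "N = U*K"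
  define P where "P = prefix_prod K t pol"
  define P' where "P' = prefix_prod K t pol'"
  define S where "S = SS K t pol N"
  define S' where "S' = SS K t pol' N"
  define pj where "pj r = (r-1) div K + 1" for r :: nat
  define pii where "pii r = (r-1) mod K + 1" for r :: nat
  have av: "avg_reward U K t pol = P N / S" using avg_eq[OF val K1 U1 tc] unfolding P_def S_def N_def .
  have av': "avg_reward U K t pol' = P' N / S'" using avg_eq[OF val' K1 U1 tc] unfolding P'_def S'_def N_def .
  have S1: "1 \<le> S" unfolding S_def N_def using SSpos[OF val K1 U1 tc] .
  have S1': "1 \<le> S'" unfolding S'_def N_def using SSpos[OF val' K1 U1 tc] .
  have Pnn: "m \<le> N \<Longrightarrow> 0 \<le> P m" for m unfolding P_def N_def using valid_fact_nonneg[OF val tc K1] by simp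
  have pos: "r \<in> {1..N} \<Longrightarrow> 0 < pol (pj r) (pii r)" for r
    unfolding pj_def pii_def N_def using opt_pos[OF opt K1 tc] by simp
  have tpos: "r \<in> {1..N} \<Longrightarrow> 0 < t (pj r) (pii r)" for r
  proof -
    assume r: "r \<in> {1..N}"
    have a: "pj r \<in> {1..U}" "pii r \<in> {1..K}" using pos_range[of r U K] r K1 unfolding pj_def pii_def N_def by auto
    then show ?thesis using tc by blast
  qed
  have nn': "r \<in> {1..N} \<Longrightarrow> 0 \<le> pol' (pj r) (pii r)" for r
  proof -
    assume r: "r \<in> {1..N}"
    have a: "pj r \<in> {1..U}" "pii r \<in> {1..K}" using pos_range[of r U K] r K1 unfolding pj_def pii_def N_def by auto
    then show ?thesis using val' unfolding valid_policy_def by blast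
  qed
  have PNnn: "0 \<le> P N" using Pnn by simp
  show ?thesis
  proof (cases "\<exists>r\<in>{1..N}. pol' (pj r) (pii r) = 0")
    case True
    have "P' N = 0" unfolding P'_def prefix_prod_def using True unfolding pj_def pii_def
      by (intro prod_zero) auto
    then show ?thesis unfolding av av' using PNnn S1 by simp
  next
    case False
    then have pos': "r \<in> {1..N} \<Longrightarrow> 0 < pol' (pj r) (pii r)" for r using nn'[of r] by force
    define \<rho> where "\<rho> r = pol' (pj r) (pii r) / pol (pj r) (pii r)" for r
    define L where "L m = (\<Sum>r\<in>{1..m}. ln (\<rho> r))" for m
    have rpos: "r \<in> {1..N} \<Longrightarrow> 0 < \<rho> r" for r unfolding \<rho>_def using pos pos' by simp
    have Pexp: "P' m = P m * exp (L m)" if m: "m \<le> N" for m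
    proof -
      have "exp (L m) = (\<Prod>r\<in>{1..m}. \<rho> r)" unfolding L_def exp_sum[OF finite_atLeastAtMost]
        using rpos m by (intro prod.cong) auto
      have pe: "P m = (\<Prod>r\<in>{1..m}. t (pj r) (pii r) * pol (pj r) (pii r))"
        unfolding P_def prefix_prod_def pj_def pii_def ..
      have pe': "P' m = (\<Prod>r\<in>{1..m}. t (pj r) (pii r) * pol' (pj r) (pii r))"
        unfolding P'_def prefix_prod_def pj_def pii_def ..
      have "P m * exp (L m) = (\<Prod>r\<in>{1..m}. t (pj r) (pii r) * pol (pj r) (pii r) * \<rho> r)"
        unfolding pe \<open>exp (L m) = _\<close> by (simp add: prod.distrib)
      also have "\<dots> = P' m" unfolding pe'
      proof (rule prod.cong)
        fix r assume "r \<in> {1..m}"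
        then have r: "r \<in> {1..N}" using m by auto
        show "t (pj r) (pii r) * pol (pj r) (pii r) * \<rho> r = t (pj r) (pii r) * pol' (pj r) (pii r)"
          using pos[OF r] unfolding \<rho>_def by simp
      qed simp
      finally show ?thesis by simp
    qed
    have S'e: "S' = (\<Sum>m\<in>{0..N}. P m * exp (L m))" unfolding S'_def SS_def
      using Pexp unfolding P'_def by (intro sum.cong) auto
    have Se: "S = (\<Sum>m\<in>{0..N}. P m)" unfolding S_def SS_def P_def ..
    define A where "A = S' / S"
    have Apos: "0 < A" unfolding A_def using S1 S1' by simp
    have jensen: "(\<Sum>m\<in>{0..N}. P m * L m) \<le> S * ln A"
    proof -
      have "(\<Sum>m\<in>{0..N}. P m * L m) \<le> (\<Sum>m\<in>{0..N}. P m * ln A + P m * (exp (L m) / A - 1))"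
      proof (rule sum_mono)
        fix m assume m: "m \<in> {0..N}"
        have "L m - ln A = ln (exp (L m) / A)" using Apos by (simp add: ln_div)
        also have "\<dots> \<le> exp (L m) / A - 1" using Apos by (intro ln_le_minus_one) simp
        finally have "P m * (L m - ln A) \<le> P m * (exp (L m) / A - 1)"
          using Pnn m by (intro mult_left_mono) auto
        then show "P m * L m \<le> P m * ln A + P m * (exp (L m) / A - 1)" by (simp add: algebra_simps)
      qed
      also have "\<dots> = S * ln A + (S' / A - S)"
      proof -
        have "(\<Sum>m\<in>{0..N}. P m * ln A + P m * (exp (L m) / A - 1)) = (\<Sum>m\<in>{0..N}. ln A * P m + P m * exp (L m) / A - P m)"
          by (rule sum.cong) (simp_all add: algebra_simps)
        also have "\<dots> = ln A * (\<Sum>m\<in>{0..N}. P m) + (\<Sum>m\<in>{0..N}. P m * exp (L m)) / A - (\<Sum>m\<in>{0..N}. P m)"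
          by (simp only: sum_subtractf sum.distrib sum_distrib_left sum_divide_distrib)
        finally show ?thesis unfolding Se S'e by simp
      qed
      also have "S' / A - S = 0" unfolding A_def using S1 S1' by simp
      finally show ?thesis by simp
    qed
    have ab: "(\<Sum>m\<in>{0..N}. P m * L m) = S * L N - (\<Sum>r\<in>{1..N}. SS K t pol (r-1) * ln (\<rho> r))"
    proof -
      have d: "L r - L (r-1) = ln (\<rho> r)" if r: "r \<in> {1..N}" for r
      proof -
        obtain r' where r': "r = Suc r'" using r by (cases r) auto
        have "L (Suc r') = L r' + ln (\<rho> (Suc r'))" unfolding L_def by simp
        then show ?thesis using r' by simp
      qed
      have "(\<Sum>r\<in>{1..N}. (\<Sum>m\<in>{0..r-1}. P m) * (L r - L (r-1))) = (\<Sum>r\<in>{1..N}. SS K t pol (r-1) * ln (\<rho> r))"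
      proof (rule sum.cong)
        fix r assume r: "r \<in> {1..N}"
        show "(\<Sum>m\<in>{0..r-1}. P m) * (L r - L (r-1)) = SS K t pol (r-1) * ln (\<rho> r)"
          unfolding d[OF r] SS_def P_def ..
      qed simp
      then show ?thesis using abel[of P L N] Se by simp
    qed
    have key: "(\<Sum>r\<in>{1..N}. SS K t pol (r-1) * ln (\<rho> r)) \<le> 0"
    proof -
      have "(\<Sum>r\<in>{1..N}. SS K t pol (r-1) * ln (\<rho> r)) \<le> (\<Sum>r\<in>{1..N}. (pol' (pj r) (pii r) - pol (pj r) (pii r)) / c (pj r))"
      proof (rule sum_mono)
        fix r assume r: "r \<in> {1..N}"
        have pr: "pj r \<in> {1..U}" "pii r \<in> {1..K}" "(pj r - 1) * K + pii r - 1 = r - 1"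
          using pos_range[of r U K] r K1 unfolding pj_def pii_def N_def by auto
        have cp: "0 < c (pj r)" using opt pr unfolding opt_rec_def by auto
        have ch: "pol (pj r) (pii r) = c (pj r) * SS K t pol (r - 1)"
          using opt_char[OF opt K1 pr(1) pr(2)] pr(3) by simp
        have "pol (pj r) (pii r) * ln (\<rho> r) \<le> pol (pj r) (pii r) * (\<rho> r - 1)"
          using rpos[OF r] pos[OF r] by (intro mult_left_mono ln_le_minus_one) auto
        also have "\<dots> = pol' (pj r) (pii r) - pol (pj r) (pii r)" unfolding \<rho>_def using pos[OF r]
          by (simp add: field_simps)
        finally have "c (pj r) * (SS K t pol (r-1) * ln (\<rho> r)) \<le> pol' (pj r) (pii r) - pol (pj r) (pii r)"
          unfolding ch by (simp add: mult.assoc)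
        then show "SS K t pol (r-1) * ln (\<rho> r) \<le> (pol' (pj r) (pii r) - pol (pj r) (pii r)) / c (pj r)"
          using cp by (simp add: le_divide_eq mult.commute)
      qed
      also have "\<dots> = (\<Sum>j\<in>{1..U}. \<Sum>i\<in>{1..K}. (pol' j i - pol j i) / c j)"
        unfolding N_def pj_def pii_def by (rule block_sum[OF K1])
      also have "\<dots> = 0"
      proof (rule sum.neutral, rule ballI)
        fix j assume j: "j \<in> {1..U}"
        have "(\<Sum>i\<in>{1..K}. (pol' j i - pol j i) / c j) = ((\<Sum>i\<in>{1..K}. pol' j i) - (\<Sum>i\<in>{1..K}. pol j i)) / c j"
          by (simp only: diff_divide_distrib sum_subtractf sum_divide_distrib)
        also have "\<dots> = 0" using val val' j unfolding valid_policy_def by simp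
        finally show "(\<Sum>i\<in>{1..K}. (pol' j i - pol j i) / c j) = 0" .
      qed
      finally show ?thesis .
    qed
    have "S * L N \<le> S * ln A" using jensen ab key by linarith
    then have "L N \<le> ln A" using S1 by simp
    then have "exp (L N) \<le> A" using Apos by (metis exp_le_cancel_iff exp_ln)
    then have "P' N \<le> P N * A" using Pexp[of N] PNnn by (simp add: mult_left_mono)
    then have "P' N * S \<le> P N * S'" unfolding A_def using S1 by (simp add: field_simps)
    then show ?thesis unfolding av av' using S1 S1' by (simp add: divide_simps mult.commute)
  qed
qed


theorem proposition13:
  fixes U K :: nat and t :: "nat \<Rightarrow> nat \<Rightarrow> real"
  assumes "1 \<le> U" and "1 \<le> K"
    and "\<forall>j\<in>{1..U}. \<forall>i\<in>{1..K}. 0 < t j i \<and> t j i \<le> 1"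
  shows "(\<exists>pol c. opt_rec U K t pol c)
       \<and> (\<forall>pol c pol' c'. opt_rec U K t pol c \<and> opt_rec U K t pol' c' \<longrightarrow>
            (\<forall>j\<in>{1..U}. c j = c' j \<and> (\<forall>i\<in>{1..K}. pol j i = pol' j i)))
       \<and> (\<forall>pol c. opt_rec U K t pol c \<longrightarrow>
            valid_policy U K pol \<and>
            (\<forall>pol'. valid_policy U K pol' \<longrightarrow> avg_reward U K t pol' \<le> avg_reward U K t pol))"
proof (intro conjI allI impI)
  show "\<exists>pol c. opt_rec U K t pol c" using exist_opt[OF assms(2) assms(3)] by blast
next
  fix pol c pol' c'
  assume "opt_rec U K t pol c \<and> opt_rec U K t pol' c'"
  then show "\<forall>j\<in>{1..U}. c j = c' j \<and> (\<forall>i\<in>{1..K}. pol j i = pol' j i)"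
    using opt_unique[OF _ _ assms(2) assms(3)] by blast
next
  fix pol c assume o: "opt_rec U K t pol c"
  show "valid_policy U K pol" using opt_valid[OF o assms(2) assms(3)] .
  fix pol' assume v: "valid_policy U K pol'"
  show "avg_reward U K t pol' \<le> avg_reward U K t pol"
    using opt_best[OF o v assms(2) assms(1) assms(3)] .
qed

end
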